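(* Consider the group-based tree model of the context with $G=\mathbb{Z}_2\times\mathbb{Z}_2$ (the Kimura 3-parameter model) on a tree $\mathscr{T}$ with $m\ge3$ leaves all of whose non-leaf vertices have degree at least $3$, with arbitrary real edge parameters $\psi^{(e)}(C),\psi^{(e)}(G),\psi^{(e)}(T)$. For each pendant edge $e$ (leaf $i$, internal endpoint $\nu$) fix leaves $j,k\neq i$ whose connecting path passes through $\nu$ and set, for $h\in\{C,G,T\}$, $$R_e(h)=\frac{q_{w(h,h,A)}\,q_{w(h,A,h)}}{q_{w(A,h,h)}},$$ where $w(a,b,c)$ assigns $a,b,c$ to leaves $i,j,k$ and $A$ to all other leaves. For each internal edge $e$ (endpoints $\nu,\nu'$) fix leaves $i,j$ whose connecting path contains $\nu$ but not $\nu'$ and $i',j'$ whose connecting path contains $\nu'$ but not $\nu$, and set $$R_e(h)=\frac{q_{z(h,A,h,A)}\,q_{z(A,h,A,h)}}{q_{z(h,h,A,A)}\,q_{z(A,A,h,h)}},$$ where $z(a,b,c,d)$ assigns $a,b,c,d$ to $i,j,i',j'$ and $A$ to all other leaves. (All denominators are nonzero.) Then all edge parameters of all edges are non-negative if and only if for every edge $e$ $$R_e(C)R_e(T)\le R_e(G),\qquad R_e(G)R_e(T)\le R_e(C),\qquad R_e(C)R_e(G)\le R_e(T).$$ Moreover, for each edge $e$ these three inequalities are respectively equivalent to $\psi^{(e)}(C)\ge0$, $\psi^{(e)}(G)\ge0$, $\psi^{(e)}(T)\ge0$.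
   Context: Group-based model on a tree. $G=\mathbb{Z}_2\times\mathbb{Z}_2$ is written additively with elements identified as $A=(0,0)$, $C=(1,0)$, $G=(0,1)$, $T=(1,1)$; characters are $\widehat{(a,b)}((c,d))=(-1)^{ac+bd}$. The Fourier transform of $a$ on the group is $\check a(g)=\sum_{h}\hat g(h)a(h)$. $\mathscr{T}$ is a finite tree with $m$ leaves, one of which is designated the root leaf $r$. Each edge $e$ carries a function $\psi^{(e)}$ from the group to $\mathbb{R}$ with $\psi^{(e)}(A)=-(\psi^{(e)}(C)+\psi^{(e)}(G)+\psi^{(e)}(T))$ (the values at $C,G,T$ are the edge parameters); put $Q^{(e)}_{g,h}=\psi^{(e)}(h-g)$, $P^{(e)}=\exp(Q^{(e)})$, $f^{(e)}(h)=P^{(e)}_{A,h}$. Edges are directed away from $r$. For $\mathbf g$ in the $m$-fold product of the group (indexed by leaves, $r$ included), $p_{\mathbf g}=\sum_\sigma\prod_{e=(u\to v)}P^{(e)}_{\sigma(u),\sigma(v)}$, the sum over all maps $\sigma$ from vertices to the group with $\sigma(r)=A$ and $\sigma$ equal to $\mathbf g$ on leaves. Its Fourier transform is $q_{\mathbf g}=\sum_{\mathbf h}\prod_x\hat g_x(h_x)p_{\mathbf h}$. For an edge $e$, $\Lambda(e)$ is the set of leaves whose path to $r$ contains $e$, ${}^*g_e=\sum_{x\in\Lambda(e)}g_x$, and it is known (Hendy; Evans–Speed) that $q_{\mathbf g}=\prod_e\check f^{(e)}({}^*g_e)$. *)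

theory Defs
  imports "HOL-Analysis.Analysis" "HOL-Library.FuncSet"
begin

datatype nuc = nA | nC | nG | nT

instance nuc :: finite
proof
  have "UNIV = {nA, nC, nG, nT}" by (auto intro: nuc.exhaust)
  then show "finite (UNIV :: nuc set)" by (metis finite.emptyI finite_insert)
qed

text \<open>Identification A=(0,0), C=(1,0), G=(0,1), T=(1,1).\<close>
fun bit1 :: "nuc \<Rightarrow> nat" where
  "bit1 nA = 0" | "bit1 nC = 1" | "bit1 nG = 0" | "bit1 nT = 1"
fun bit2 :: "nuc \<Rightarrow> nat" where
  "bit2 nA = 0" | "bit2 nC = 0" | "bit2 nG = 1" | "bit2 nT = 1"

definition of_bits :: "nat \<Rightarrow> nat \<Rightarrow> nuc" where
  "of_bits a b = (if a = 0 then (if b = 0 then nA else nG) else (if b = 0 then nC else nT))"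

definition nadd :: "nuc \<Rightarrow> nuc \<Rightarrow> nuc" where
  "nadd g h = of_bits ((bit1 g + bit1 h) mod 2) ((bit2 g + bit2 h) mod 2)"

definition nsub :: "nuc \<Rightarrow> nuc \<Rightarrow> nuc" where
  "nsub h g = of_bits (nat ((int (bit1 h) - int (bit1 g)) mod 2))
                      (nat ((int (bit2 h) - int (bit2 g)) mod 2))"

definition chi :: "nuc \<Rightarrow> nuc \<Rightarrow> real" where
  "chi g h = (-1) ^ (bit1 g * bit1 h + bit2 g * bit2 h)"

fun mpow :: "(nuc \<Rightarrow> nuc \<Rightarrow> real) \<Rightarrow> nat \<Rightarrow> nuc \<Rightarrow> nuc \<Rightarrow> real" where
  "mpow Q 0 = (\<lambda>g h. if g = h then 1 else 0)"
| "mpow Q (Suc n) = (\<lambda>g h. \<Sum>k\<in>UNIV. mpow Q n g k * Q k h)"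

definition mexp :: "(nuc \<Rightarrow> nuc \<Rightarrow> real) \<Rightarrow> nuc \<Rightarrow> nuc \<Rightarrow> real" where
  "mexp Q g h = (\<Sum>n. mpow Q n g h / fact n)"

definition is_path :: "'v set \<Rightarrow> ('v \<Rightarrow> 'v \<Rightarrow> bool) \<Rightarrow> 'v list \<Rightarrow> 'v \<Rightarrow> 'v \<Rightarrow> bool" where
  "is_path V adj ps x y \<longleftrightarrow> ps \<noteq> [] \<and> hd ps = x \<and> last ps = y \<and> distinct ps \<and> set ps \<subseteq> V
     \<and> (\<forall>i. Suc i < length ps \<longrightarrow> adj (ps ! i) (ps ! Suc i))"

definition on_path :: "'v set \<Rightarrow> ('v \<Rightarrow> 'v \<Rightarrow> bool) \<Rightarrow> 'v \<Rightarrow> 'v \<Rightarrow> 'v \<Rightarrow> bool" where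
  "on_path V adj w x y \<longleftrightarrow> (\<exists>ps. is_path V adj ps x y \<and> w \<in> set ps)"

definition is_tree :: "'v set \<Rightarrow> ('v \<Rightarrow> 'v \<Rightarrow> bool) \<Rightarrow> bool" where
  "is_tree V adj \<longleftrightarrow> finite V \<and> V \<noteq> {}
     \<and> (\<forall>u v. adj u v \<longrightarrow> u \<in> V \<and> v \<in> V)
     \<and> (\<forall>u v. adj u v \<longrightarrow> adj v u) \<and> (\<forall>u. \<not> adj u u)
     \<and> (\<forall>x\<in>V. \<forall>y\<in>V. \<exists>ps. is_path V adj ps x y)
     \<and> \<not> (\<exists>ps. length ps \<ge> 3 \<and> distinct ps \<and> set ps \<subseteq> V
            \<and> (\<forall>i. Suc i < length ps \<longrightarrow> adj (ps ! i) (ps ! Suc i))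
            \<and> adj (last ps) (hd ps))"

definition neighbours :: "'v set \<Rightarrow> ('v \<Rightarrow> 'v \<Rightarrow> bool) \<Rightarrow> 'v \<Rightarrow> 'v set" where
  "neighbours V adj v = {u \<in> V. adj v u}"

definition leaves :: "'v set \<Rightarrow> ('v \<Rightarrow> 'v \<Rightarrow> bool) \<Rightarrow> 'v set" where
  "leaves V adj = {v \<in> V. card (neighbours V adj v) = 1}"

text \<open>Edges directed away from the root leaf r: (u,v) with u on the path from r to v.\<close>
definition dedges :: "'v set \<Rightarrow> ('v \<Rightarrow> 'v \<Rightarrow> bool) \<Rightarrow> 'v \<Rightarrow> ('v \<times> 'v) set" where
  "dedges V adj r = {(u, v). adj u v \<and> on_path V adj u r v}"

text \<open>Full edge function: psi(A) = -(psi(C)+psi(G)+psi(T)); the values at C,G,T are the parameters.\<close>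
definition fpsi :: "('e \<Rightarrow> nuc \<Rightarrow> real) \<Rightarrow> 'e \<Rightarrow> nuc \<Rightarrow> real" where
  "fpsi psi e h = (if h = nA then - (psi e nC + psi e nG + psi e nT) else psi e h)"

definition Qm :: "('e \<Rightarrow> nuc \<Rightarrow> real) \<Rightarrow> 'e \<Rightarrow> nuc \<Rightarrow> nuc \<Rightarrow> real" where
  "Qm psi e g h = fpsi psi e (nsub h g)"

definition Pm :: "('e \<Rightarrow> nuc \<Rightarrow> real) \<Rightarrow> 'e \<Rightarrow> nuc \<Rightarrow> nuc \<Rightarrow> real" where
  "Pm psi e = mexp (Qm psi e)"

definition pprob :: "'v set \<Rightarrow> ('v \<Rightarrow> 'v \<Rightarrow> bool) \<Rightarrow> 'v \<Rightarrow> ('v \<times> 'v \<Rightarrow> nuc \<Rightarrow> real)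
     \<Rightarrow> ('v \<Rightarrow> nuc) \<Rightarrow> real" where
  "pprob V adj r psi g =
     (\<Sum>\<sigma> \<in> {\<sigma> \<in> V \<rightarrow>\<^sub>E (UNIV :: nuc set). \<sigma> r = nA \<and> (\<forall>x\<in>leaves V adj. \<sigma> x = g x)}.
        \<Prod>e \<in> dedges V adj r. Pm psi e (\<sigma> (fst e)) (\<sigma> (snd e)))"

definition qfour :: "'v set \<Rightarrow> ('v \<Rightarrow> 'v \<Rightarrow> bool) \<Rightarrow> 'v \<Rightarrow> ('v \<times> 'v \<Rightarrow> nuc \<Rightarrow> real)
     \<Rightarrow> ('v \<Rightarrow> nuc) \<Rightarrow> real" where
  "qfour V adj r psi g =
     (\<Sum>h \<in> leaves V adj \<rightarrow>\<^sub>E (UNIV :: nuc set).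
        (\<Prod>x \<in> leaves V adj. chi (g x) (h x)) * pprob V adj r psi h)"

text \<open>Leaf labelling assigning a,b,c to i,j,k and A elsewhere (w) and a,b,c,d to i,j,i',j' (z).\<close>
definition lab3 :: "'v \<Rightarrow> 'v \<Rightarrow> 'v \<Rightarrow> nuc \<Rightarrow> nuc \<Rightarrow> nuc \<Rightarrow> 'v \<Rightarrow> nuc" where
  "lab3 i j k a b c = (\<lambda>x. if x = i then a else if x = j then b else if x = k then c else nA)"

definition lab4 :: "'v \<Rightarrow> 'v \<Rightarrow> 'v \<Rightarrow> 'v \<Rightarrow> nuc \<Rightarrow> nuc \<Rightarrow> nuc \<Rightarrow> nuc \<Rightarrow> 'v \<Rightarrow> nuc" where
  "lab4 i j i' j' a b c d = (\<lambda>x. if x = i then a else if x = j then b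
       else if x = i' then c else if x = j' then d else nA)"

text \<open>For a pendant edge e: the leaf endpoint i and the internal endpoint nu.\<close>
definition pend_leaf :: "'v set \<Rightarrow> ('v \<Rightarrow> 'v \<Rightarrow> bool) \<Rightarrow> 'v \<times> 'v \<Rightarrow> 'v" where
  "pend_leaf V adj e = (if snd e \<in> leaves V adj then snd e else fst e)"
definition pend_inner :: "'v set \<Rightarrow> ('v \<Rightarrow> 'v \<Rightarrow> bool) \<Rightarrow> 'v \<times> 'v \<Rightarrow> 'v" where
  "pend_inner V adj e = (if snd e \<in> leaves V adj then fst e else snd e)"

definition is_pendant :: "'v set \<Rightarrow> ('v \<Rightarrow> 'v \<Rightarrow> bool) \<Rightarrow> 'v \<times> 'v \<Rightarrow> bool" where
  "is_pendant V adj e \<longleftrightarrow> fst e \<in> leaves V adj \<or> snd e \<in> leaves V adj"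

text \<open>Admissible choice of leaves for edge e.
  Pendant edge: s1 = j, s2 = k (s3, s4 unused).
  Internal edge e = (nu, nu'): s1 = i, s2 = j, s3 = i', s4 = j'.\<close>
definition admissible :: "'v set \<Rightarrow> ('v \<Rightarrow> 'v \<Rightarrow> bool) \<Rightarrow> 'v \<times> 'v \<Rightarrow> 'v \<Rightarrow> 'v \<Rightarrow> 'v \<Rightarrow> 'v \<Rightarrow> bool" where
  "admissible V adj e s1 s2 s3 s4 \<longleftrightarrow>
     (if is_pendant V adj e then
        s1 \<in> leaves V adj \<and> s2 \<in> leaves V adj \<and> s1 \<noteq> pend_leaf V adj e \<and> s2 \<noteq> pend_leaf V adj e
        \<and> on_path V adj (pend_inner V adj e) s1 s2
      else
        s1 \<in> leaves V adj \<and> s2 \<in> leaves V adj \<and> s3 \<in> leaves V adj \<and> s4 \<in> leaves V adj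
        \<and> on_path V adj (fst e) s1 s2 \<and> \<not> on_path V adj (snd e) s1 s2
        \<and> on_path V adj (snd e) s3 s4 \<and> \<not> on_path V adj (fst e) s3 s4)"

definition Rnum :: "'v set \<Rightarrow> ('v \<Rightarrow> 'v \<Rightarrow> bool) \<Rightarrow> 'v \<Rightarrow> ('v \<times> 'v \<Rightarrow> nuc \<Rightarrow> real)
   \<Rightarrow> 'v \<times> 'v \<Rightarrow> 'v \<Rightarrow> 'v \<Rightarrow> 'v \<Rightarrow> 'v \<Rightarrow> nuc \<Rightarrow> real" where
  "Rnum V adj r psi e s1 s2 s3 s4 h =
     (let q = qfour V adj r psi in
      if is_pendant V adj e then
        (let i = pend_leaf V adj e in q (lab3 i s1 s2 h h nA) * q (lab3 i s1 s2 h nA h))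
      else q (lab4 s1 s2 s3 s4 h nA h nA) * q (lab4 s1 s2 s3 s4 nA h nA h))"

definition Rden :: "'v set \<Rightarrow> ('v \<Rightarrow> 'v \<Rightarrow> bool) \<Rightarrow> 'v \<Rightarrow> ('v \<times> 'v \<Rightarrow> nuc \<Rightarrow> real)
   \<Rightarrow> 'v \<times> 'v \<Rightarrow> 'v \<Rightarrow> 'v \<Rightarrow> 'v \<Rightarrow> 'v \<Rightarrow> nuc \<Rightarrow> real" where
  "Rden V adj r psi e s1 s2 s3 s4 h =
     (let q = qfour V adj r psi in
      if is_pendant V adj e then
        (let i = pend_leaf V adj e in q (lab3 i s1 s2 nA h h))
      else q (lab4 s1 s2 s3 s4 h h nA nA) * q (lab4 s1 s2 s3 s4 nA nA h h))"

definition Rratio :: "'v set \<Rightarrow> ('v \<Rightarrow> 'v \<Rightarrow> bool) \<Rightarrow> 'v \<Rightarrow> ('v \<times> 'v \<Rightarrow> nuc \<Rightarrow> real)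
   \<Rightarrow> 'v \<times> 'v \<Rightarrow> 'v \<Rightarrow> 'v \<Rightarrow> 'v \<Rightarrow> 'v \<Rightarrow> nuc \<Rightarrow> real" where
  "Rratio V adj r psi e s1 s2 s3 s4 h =
     Rnum V adj r psi e s1 s2 s3 s4 h / Rden V adj r psi e s1 s2 s3 s4 h"

end

theory Submission
  imports Defs
begin



lemma UNIV_nuc: "(UNIV :: nuc set) = {nA, nC, nG, nT}"
  by (auto intro: nuc.exhaust)

lemma nadd_tab: "nadd nA x = x" "nadd x nA = x" "nadd x x = nA"
  "nadd nC nG = nT" "nadd nG nC = nT" "nadd nC nT = nG" "nadd nT nC = nG" "nadd nG nT = nC" "nadd nT nG = nC"
  by (cases x; simp add: nadd_def of_bits_def)+

lemma nsub_eq: "nsub x y = nadd x y"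
  by (cases x; cases y; simp add: nadd_def nsub_def of_bits_def)

instantiation nuc :: ab_group_add
begin
definition "zero_nuc = nA"
definition "plus_nuc = nadd"
definition "minus_nuc = nsub"
definition "uminus_nuc = (\<lambda>x::nuc. x)"
instance
proof
  fix a b c :: nuc
  show "a + b + c = a + (b + c)" unfolding plus_nuc_def
    by (cases a; cases b; cases c) (simp_all add: nadd_tab)
  show "a + b = b + a" unfolding plus_nuc_def
    by (cases a; cases b) (simp_all add: nadd_tab)
  show "0 + a = a" unfolding plus_nuc_def zero_nuc_def
    by (simp add: nadd_tab)
  show "- a + a = 0" unfolding plus_nuc_def zero_nuc_def uminus_nuc_def
    by (simp add: nadd_tab)
  show "a - b = a + - b" unfolding plus_nuc_def minus_nuc_def uminus_nuc_def
    by (simp add: nsub_eq)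
qed
end

lemma nuc_neg: "- (x::nuc) = x" by (simp add: uminus_nuc_def)
lemma nuc_diff: "(x::nuc) - y = x + y" by (simp add: minus_nuc_def plus_nuc_def nsub_eq)
lemma nA0[simp]: "nA = 0" by (simp add: zero_nuc_def)
lemma nuc_tab[simp]: "(x::nuc) + x = 0"
  "nC + nG = nT" "nG + nC = nT" "nC + nT = nG" "nT + nC = nG" "nG + nT = nC" "nT + nG = nC"
  by (simp_all add: plus_nuc_def nadd_tab flip: nA0)

lemma nuc_distinct[simp]: "(0::nuc) \<noteq> nC" "(0::nuc) \<noteq> nG" "(0::nuc) \<noteq> nT"
  "nC \<noteq> (0::nuc)" "nG \<noteq> (0::nuc)" "nT \<noteq> (0::nuc)"
  by (simp_all flip: nA0)

lemma sum_nuc: "(\<Sum>x\<in>(UNIV::nuc set). f x) = f 0 + f nC + f nG + f nT"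
  by (simp add: UNIV_nuc add_ac)

lemma card_nuc[simp]: "CARD(nuc) = 4" by (simp add: UNIV_nuc)

lemma chi_tab[simp]: "chi 0 x = 1" "chi x 0 = 1" "chi nC nC = -1" "chi nC nG = 1" "chi nC nT = -1"
  "chi nG nC = 1" "chi nG nG = -1" "chi nG nT = -1"  "chi nT nC = -1" "chi nT nG = -1" "chi nT nT = 1"
  by (cases x; simp add: chi_def flip: nA0)+

lemma nuc_cases: "P 0 \<Longrightarrow> P nC \<Longrightarrow> P nG \<Longrightarrow> P nT \<Longrightarrow> P x"
  by (cases x) (auto simp flip: nA0)

lemma chi_add2: "chi g (a + b) = chi g a * chi g b"
  by (rule nuc_cases[of _ g]; rule nuc_cases[of _ a]; rule nuc_cases[of _ b]; simp)

lemma chi_add1: "chi (a + b) g = chi a g * chi b g"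
  by (rule nuc_cases[of _ g]; rule nuc_cases[of _ a]; rule nuc_cases[of _ b]; simp)

lemma chi_sum2: "finite A \<Longrightarrow> chi g (\<Sum>v\<in>A. f v) = (\<Prod>v\<in>A. chi g (f v))"
  by (induction A rule: finite_induct) (simp_all add: chi_add2)

lemma chi_sum1: "finite A \<Longrightarrow> chi (\<Sum>v\<in>A. f v) g = (\<Prod>v\<in>A. chi (f v) g)"
  by (induction A rule: finite_induct) (simp_all add: chi_add1)




definition lam :: "('e \<Rightarrow> nuc \<Rightarrow> real) \<Rightarrow> 'e \<Rightarrow> nuc \<Rightarrow> real" where
  "lam psi e k = (\<Sum>h\<in>UNIV. chi k h * fpsi psi e h)"

lemma lam0[simp]: "lam psi e 0 = 0"
  by (simp add: lam_def sum_nuc fpsi_def)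

lemma Qm_four: "Qm psi e a b = (\<Sum>k\<in>UNIV. lam psi e k * chi k a * chi k b) / 4"
  unfolding Qm_def lam_def nsub_eq
  by (rule nuc_cases[of _ a]; rule nuc_cases[of _ b]; simp add: sum_nuc fpsi_def flip: plus_nuc_def; simp add: algebra_simps flip: nA0)

lemma chi_orth: "(\<Sum>m\<in>UNIV. chi k m * chi k' m) = (if k = k' then 4 else 0)"
  by (rule nuc_cases[of _ k]; rule nuc_cases[of _ k']; simp add: sum_nuc)

lemma mpow_step: "(\<Sum>m\<in>UNIV. ((\<Sum>k\<in>UNIV. L k ^ n * chi k a * chi k m) / 4) * ((\<Sum>k\<in>UNIV. L k * chi k m * chi k b) / 4))
   = (\<Sum>k\<in>UNIV. L k ^ Suc n * chi k a * chi k b) / 4"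
proof -
  define F where "F k k' = L k ^ n * chi k a * L k' * chi k' b / 16" for k k'
  have "(\<Sum>m\<in>UNIV. ((\<Sum>k\<in>UNIV. L k ^ n * chi k a * chi k m) / 4) * ((\<Sum>k\<in>UNIV. L k * chi k m * chi k b) / 4))
    = (\<Sum>m\<in>UNIV. \<Sum>k\<in>UNIV. \<Sum>k'\<in>UNIV. F k k' * (chi k m * chi k' m))"
  proof (rule sum.cong[OF refl])
    fix m
    have "((\<Sum>k\<in>UNIV. L k ^ n * chi k a * chi k m) / 4) * ((\<Sum>k\<in>UNIV. L k * chi k m * chi k b) / 4)
      = (\<Sum>k\<in>UNIV. \<Sum>k'\<in>UNIV. (L k ^ n * chi k a * chi k m) * (L k' * chi k' m * chi k' b) / 16)"
      by (simp add: sum_product sum_divide_distrib)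
    also have "\<dots> = (\<Sum>k\<in>UNIV. \<Sum>k'\<in>UNIV. F k k' * (chi k m * chi k' m))"
      unfolding F_def by (intro sum.cong refl) (simp add: mult_ac)
    finally show "((\<Sum>k\<in>UNIV. L k ^ n * chi k a * chi k m) / 4) * ((\<Sum>k\<in>UNIV. L k * chi k m * chi k b) / 4)
      = (\<Sum>k\<in>UNIV. \<Sum>k'\<in>UNIV. F k k' * (chi k m * chi k' m))" .
  qed
  also have "\<dots> = (\<Sum>k\<in>UNIV. \<Sum>m\<in>UNIV. \<Sum>k'\<in>UNIV. F k k' * (chi k m * chi k' m))"
    by (rule sum.swap)
  also have "\<dots> = (\<Sum>k\<in>UNIV. \<Sum>k'\<in>UNIV. \<Sum>m\<in>UNIV. F k k' * (chi k m * chi k' m))"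
    by (rule sum.cong[OF refl], rule sum.swap)
  also have "\<dots> = (\<Sum>k\<in>UNIV. \<Sum>k'\<in>UNIV. F k k' * (if k = k' then 4 else 0))"
    by (simp add: sum_distrib_left[symmetric] chi_orth)
  also have "\<dots> = (\<Sum>k\<in>UNIV. L k ^ Suc n * chi k a * chi k b / 4)"
    by (simp add: if_distrib F_def mult_ac cong: if_cong)
  finally show ?thesis by (simp add: sum_divide_distrib)
qed
lemma mpow_four: "mpow (Qm psi e) n a b = (\<Sum>k\<in>UNIV. lam psi e k ^ n * chi k a * chi k b) / 4"
proof (induction n arbitrary: a b)
  case 0
  show ?case
    by (rule nuc_cases[of _ a]; rule nuc_cases[of _ b]; simp add: sum_nuc)
next
  case (Suc n)
  have "mpow (Qm psi e) (Suc n) a b = (\<Sum>k\<in>UNIV. mpow (Qm psi e) n a k * Qm psi e k b)" by simp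
  also have "\<dots> = (\<Sum>m\<in>UNIV. ((\<Sum>k\<in>UNIV. lam psi e k ^ n * chi k a * chi k m) / 4) * ((\<Sum>k\<in>UNIV. lam psi e k * chi k m * chi k b) / 4))"
    by (intro sum.cong refl) (simp only: Suc.IH Qm_four)
  finally show ?case using mpow_step[of "lam psi e" n a b] by simp
qed

lemma Pm_four: "Pm psi e a b = (\<Sum>k\<in>UNIV. exp (lam psi e k) * chi k a * chi k b) / 4"
proof -
  have "(\<lambda>n. \<Sum>k\<in>UNIV. (lam psi e k ^ n / fact n) * (chi k a * chi k b / 4))
        sums (\<Sum>k\<in>UNIV. exp (lam psi e k) * (chi k a * chi k b / 4))"
    by (intro sums_sum sums_mult2) (use exp_converges[of "lam psi e _"] in \<open>simp add: divide_inverse mult.commute\<close>)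
  moreover have "(\<lambda>n. \<Sum>k\<in>UNIV. (lam psi e k ^ n / fact n) * (chi k a * chi k b / 4))
     = (\<lambda>n. mpow (Qm psi e) n a b / fact n)"
    by (simp add: mpow_four sum_divide_distrib sum_distrib_left algebra_simps)
  ultimately show ?thesis
    unfolding Pm_def mexp_def
    by (simp add: sums_unique[symmetric] sum_divide_distrib algebra_simps)
qed


definition Fm :: "('e \<Rightarrow> nuc \<Rightarrow> real) \<Rightarrow> 'e \<Rightarrow> nuc \<Rightarrow> real" where
  "Fm psi e t = (\<Sum>k\<in>UNIV. exp (lam psi e k) * chi k t) / 4"

lemma Pm_Fm: "Pm psi e a b = Fm psi e (b - a)"
  unfolding Pm_four Fm_def nuc_diff by (simp add: chi_add2 mult_ac)

lemma Fm_hat: "(\<Sum>t\<in>UNIV. chi g t * Fm psi e t) = exp (lam psi e g)"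
proof -
  have "(\<Sum>t\<in>UNIV. chi g t * Fm psi e t) = (\<Sum>t\<in>UNIV. \<Sum>k\<in>UNIV. exp (lam psi e k) / 4 * (chi g t * chi k t))"
    unfolding Fm_def by (simp add: sum_distrib_left sum_divide_distrib mult_ac)
  also have "\<dots> = (\<Sum>k\<in>UNIV. \<Sum>t\<in>UNIV. exp (lam psi e k) / 4 * (chi g t * chi k t))"
    by (rule sum.swap)
  also have "\<dots> = (\<Sum>k\<in>UNIV. exp (lam psi e k) / 4 * (if g = k then 4 else 0))"
    by (intro sum.cong refl) (simp only: sum_distrib_left[symmetric] chi_orth)
  also have "\<dots> = exp (lam psi e g)"
    by (simp add: if_distrib cong: if_cong)
  finally show ?thesis .
qed




lemma is_path_alt: "is_path V adj ps x y \<longleftrightarrow> ps \<noteq> [] \<and> hd ps = x \<and> last ps = y \<and> distinct ps \<and> set ps \<subseteq> V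
     \<and> successively adj ps"
  unfolding is_path_def successively_conv_nth by blast

lemma exit_list: "xs \<noteq> [] \<Longrightarrow> P (hd xs) \<Longrightarrow> \<not> P (last xs) \<Longrightarrow> \<exists>ys a b zs. xs = ys @ a # b # zs \<and> P a \<and> \<not> P b"
proof (induction xs)
  case Nil then show ?case by simp
next
  case (Cons x xs)
  then have ne: "xs \<noteq> []" by auto
  show ?case
  proof (cases "P (hd xs)")
    case True
    with Cons ne obtain ys a b zs where "xs = ys @ a # b # zs \<and> P a \<and> \<not> P b" by auto
    then show ?thesis by (intro exI[of _ "x # ys"]) auto
  next
    case False
    then show ?thesis using Cons ne by (intro exI[of _ "[]"] exI[of _ x] exI[of _ "hd xs"] exI[of _ "tl xs"]) auto
  qed
qed

locale rtree =
  fixes V :: "'v set" and adj :: "'v \<Rightarrow> 'v \<Rightarrow> bool" and r :: 'v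
  assumes tree: "is_tree V adj" and rV: "r \<in> V"
begin

lemma finV: "finite V" using tree by (simp add: is_tree_def)
lemma adjV: "adj u v \<Longrightarrow> u \<in> V \<and> v \<in> V" using tree by (simp add: is_tree_def)
lemma adj_sym: "adj u v \<Longrightarrow> adj v u" using tree by (simp add: is_tree_def)
lemma adj_irr: "\<not> adj u u" using tree by (simp add: is_tree_def)
lemma conn: "x \<in> V \<Longrightarrow> y \<in> V \<Longrightarrow> \<exists>ps. is_path V adj ps x y" using tree by (simp add: is_tree_def)
lemma nocyc: "length ps \<ge> 3 \<Longrightarrow> distinct ps \<Longrightarrow> set ps \<subseteq> V \<Longrightarrow> successively adj ps \<Longrightarrow> adj (last ps) (hd ps) \<Longrightarrow> False"
  using tree unfolding is_tree_def successively_conv_nth by blast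

lemma succ_sym: "successively adj (rev ps) \<longleftrightarrow> successively adj ps"
proof -
  have "successively (\<lambda>x y. adj y x) ps \<longleftrightarrow> successively adj ps"
    by (rule successively_cong) (auto intro: adj_sym)
  then show ?thesis by simp
qed

lemma cycle_from:
  assumes w1: "successively adj (x # ps')" and w2: "successively adj (x # qs')"
    and d1: "distinct (x # ps')" and d2: "distinct (x # qs')"
    and s1: "set (x # ps') \<subseteq> V" and s2: "set (x # qs') \<subseteq> V"
    and ne1: "ps' \<noteq> []" and ne2: "qs' \<noteq> []" and l: "last ps' = last qs'" and h: "hd ps' \<noteq> hd qs'"
  shows False
proof -
  have "\<exists>w\<in>set ps'. w \<in> set qs'" using ne1 ne2 l by (metis last_in_set)
  then obtain p1 w p2 where ps': "ps' = p1 @ w # p2" and wq: "w \<in> set qs'" and p1q: "\<forall>y\<in>set p1. y \<notin> set qs'"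
    using split_list_first_prop[of ps' "\<lambda>y. y \<in> set qs'"] by blast
  obtain q1 q2 where qs': "qs' = q1 @ w # q2" using wq split_list by metis
  define cyc where "cyc = x # p1 @ w # rev q1"
  have hdq: "hd qs' = (if q1 = [] then w else hd q1)" using qs' by auto
  have len: "length cyc \<ge> 3"
  proof (cases "p1 = []")
    case True
    then have "q1 \<noteq> []" using h ps' qs' by auto
    then show ?thesis by (cases q1) (simp_all add: cyc_def)
  next
    case False then show ?thesis by (cases p1) (simp_all add: cyc_def)
  qed
  have dist: "distinct cyc"
  proof -
    have a: "x \<notin> set p1" "x \<noteq> w" "distinct p1" "w \<notin> set p1" using d1 unfolding ps' by auto
    have b: "x \<notin> set q1" "distinct q1" "w \<notin> set q1" using d2 unfolding qs' by auto
    have c: "set p1 \<inter> set q1 = {}" using p1q unfolding qs' by auto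
    show ?thesis unfolding cyc_def using a b c by auto
  qed
  have setc: "set cyc \<subseteq> V" using s1 s2 unfolding cyc_def ps' qs' by auto
  have wa: "successively adj (x # p1 @ [w])"
  proof -
    have "successively adj ((x # p1 @ [w]) @ p2)" using w1 unfolding ps' by simp
    then show ?thesis unfolding successively_append_iff by blast
  qed
  have wq1: "successively adj q1" "q1 \<noteq> [] \<Longrightarrow> adj (last q1) w"
    using w2 unfolding qs' by (auto simp: successively_append_iff successively_Cons)
  have "successively adj (x # p1 @ w # rev q1)"
  proof -
    have j: "rev q1 = [] \<or> adj (last (x # p1 @ [w])) (hd (rev q1))"
      using wq1(2) by (cases "q1 = []") (auto simp: hd_rev intro: adj_sym)
    have "successively adj ((x # p1 @ [w]) @ rev q1)"
      unfolding successively_append_iff[of adj "x # p1 @ [w]" "rev q1"]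
      using wa wq1(1) j succ_sym by blast
    then show ?thesis by simp
  qed
  then have walk: "successively adj cyc" by (simp add: cyc_def)
  have "adj x (hd qs')" using w2 ne2 by (cases qs') auto
  then have "adj (last cyc) (hd cyc)" using hdq by (auto simp: cyc_def last_rev intro: adj_sym)
  then show False using nocyc[OF len dist setc walk] by blast
qed

lemma path_unique: "is_path V adj ps x y \<Longrightarrow> is_path V adj qs x y \<Longrightarrow> ps = qs"
proof (induction ps arbitrary: x qs)
  case Nil then show ?case by (simp add: is_path_alt)
next
  case (Cons x0 ps')
  from Cons.prems have x0: "x0 = x" by (simp add: is_path_alt)
  obtain qs' where qs: "qs = x # qs'" using Cons.prems by (cases qs) (auto simp: is_path_alt)
  show ?case
  proof (cases "ps' = []")
    case True
    then have "y = x" using Cons.prems x0 by (simp add: is_path_alt)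
    then have "qs' = []" using Cons.prems qs by (auto simp: is_path_alt dest: last_in_set split: if_splits)
    then show ?thesis using True x0 qs by simp
  next
    case ne1: False
    show ?thesis
    proof (cases "qs' = []")
      case True
      then have "y = x" using Cons.prems qs by (simp add: is_path_alt)
      then have False using Cons.prems x0 ne1 by (auto simp: is_path_alt dest: last_in_set)
      then show ?thesis ..
    next
      case ne2: False
      show ?thesis
      proof (cases "hd ps' = hd qs'")
        case True
        have "is_path V adj ps' (hd ps') y" using Cons.prems(1) ne1 by (auto simp: is_path_alt successively_Cons)
        moreover have "is_path V adj qs' (hd ps') y" using Cons.prems(2) ne2 True qs by (auto simp: is_path_alt successively_Cons)
        ultimately have "ps' = qs'" using Cons.IH by blast
        then show ?thesis using x0 qs by simp
      next
        case False
        have "last ps' = last qs'" using Cons.prems x0 qs ne1 ne2 by (simp add: is_path_alt)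
        then have False using cycle_from[of x ps' qs'] Cons.prems x0 qs ne1 ne2 False
          by (simp add: is_path_alt)
        then show ?thesis ..
      qed
    qed
  qed
qed


definition tp :: "'v \<Rightarrow> 'v \<Rightarrow> 'v list" where
  "tp x y = (THE ps. is_path V adj ps x y)"

lemma tp: "x \<in> V \<Longrightarrow> y \<in> V \<Longrightarrow> is_path V adj (tp x y) x y"
  unfolding tp_def using conn path_unique by (metis theI)

lemma tp_eq: "is_path V adj ps x y \<Longrightarrow> tp x y = ps"
proof -
  assume p: "is_path V adj ps x y"
  then have "x \<in> V" "y \<in> V" by (auto simp: is_path_alt dest: hd_in_set last_in_set)
  then show ?thesis using tp p path_unique by blast
qed

lemma on_path_iff: "x \<in> V \<Longrightarrow> y \<in> V \<Longrightarrow> on_path V adj w x y \<longleftrightarrow> w \<in> set (tp x y)"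
  unfolding on_path_def using tp tp_eq by blast

lemma is_path_rev: "is_path V adj ps x y \<Longrightarrow> is_path V adj (rev ps) y x"
  by (simp add: is_path_alt succ_sym hd_rev last_rev del: successively_rev)

lemma on_path_sym: "on_path V adj w x y \<longleftrightarrow> on_path V adj w y x"
  unfolding on_path_def using is_path_rev by (metis set_rev rev_rev_ident)

definition anc :: "'v \<Rightarrow> 'v set" where "anc x = set (tp r x)"
definition parent :: "'v \<Rightarrow> 'v" where "parent x = last (butlast (tp r x))"
definition depth :: "'v \<Rightarrow> nat" where "depth x = length (tp r x)"

lemma tpr: assumes "x \<in> V" shows "tp r x \<noteq> []" "hd (tp r x) = r" "last (tp r x) = x" "distinct (tp r x)"
  "set (tp r x) \<subseteq> V" "successively adj (tp r x)"
  using tp[OF rV assms] by (simp_all add: is_path_alt)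

lemma anc_self: "x \<in> V \<Longrightarrow> x \<in> anc x"
  using tpr[of x] unfolding anc_def by (metis last_in_set)
lemma anc_root: "x \<in> V \<Longrightarrow> r \<in> anc x"
  using tpr[of x] unfolding anc_def by (metis hd_in_set)
lemma anc_V: "x \<in> V \<Longrightarrow> anc x \<subseteq> V"
  using tpr[of x] unfolding anc_def by blast
lemma tp_rr: "tp r r = [r]"
  by (rule tp_eq) (simp add: is_path_alt rV)
lemma anc_r: "anc r = {r}" by (simp add: anc_def tp_rr)

lemma tp_inj: "x \<in> V \<Longrightarrow> y \<in> V \<Longrightarrow> tp r x = tp r y \<Longrightarrow> x = y"
  using tpr(3) by metis

lemma tp_prefix:
  assumes y: "y \<in> V" and k: "k < length (tp r y)"
  shows "tp r (tp r y ! k) = take (Suc k) (tp r y)"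
proof (rule tp_eq)
  let ?ps = "tp r y"
  have "successively adj (take (Suc k) ?ps @ drop (Suc k) ?ps)" using tpr(6)[OF y] by simp
  then have "successively adj (take (Suc k) ?ps)" unfolding successively_append_iff by blast
  moreover have "last (take (Suc k) ?ps) = ?ps ! k" using k by (simp add: take_Suc_conv_app_nth)
  moreover have "hd (take (Suc k) ?ps) = r" using tpr(1,2)[OF y] by (simp add: hd_take)
  moreover have "distinct (take (Suc k) ?ps)" using tpr(4)[OF y] by simp
  moreover have "set (take (Suc k) ?ps) \<subseteq> V" using tpr(5)[OF y] by (meson order_trans set_take_subset)
  ultimately show "is_path V adj (take (Suc k) ?ps) r (?ps ! k)"
    using tpr(1)[OF y] by (simp add: is_path_alt)
qed

lemma tp_parent:
  assumes x: "x \<in> V" and xr: "x \<noteq> r"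
  shows "parent x \<in> V" "tp r x = tp r (parent x) @ [x]" "adj (parent x) x" "parent x \<noteq> x"
    "depth (parent x) < depth x"
proof -
  let ?ps = "tp r x"
  have len: "length ?ps \<ge> 2"
  proof (rule ccontr)
    assume "\<not> ?thesis"
    moreover have "length ?ps \<noteq> 0" using tpr(1)[OF x] by simp
    ultimately have "length ?ps = 1" by arith
    then have "hd ?ps = last ?ps" by (cases ?ps) auto
    then show False using tpr(2,3)[OF x] xr by simp
  qed
  have nb: "butlast ?ps \<noteq> []" using len by (cases ?ps rule: rev_cases) auto
  have pk: "parent x = ?ps ! (length ?ps - 2)"
    unfolding parent_def using len by (simp add: last_conv_nth[OF nb] nth_butlast numeral_2_eq_2)
  have pre: "tp r (parent x) = butlast ?ps"
    unfolding pk using len by (subst tp_prefix[OF x]) (auto simp: butlast_conv_take Suc_diff_Suc numeral_2_eq_2)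
  have eq: "?ps = butlast ?ps @ [x]" using tpr(1,3)[OF x] by (metis append_butlast_last_id)
  show "tp r x = tp r (parent x) @ [x]" using pre eq by simp
  have lb: "last (butlast ?ps) = parent x" by (simp add: parent_def)
  show "parent x \<in> V" using pk len tpr(5)[OF x] by (metis diff_less nth_mem subsetD zero_less_numeral less_le_trans le0 le_less_trans
      diff_le_self less_imp_le_nat order.strict_trans2 pos2)
  have "successively adj (butlast ?ps @ [x])" using eq tpr(6)[OF x] by metis
  then show "adj (parent x) x" using nb lb unfolding successively_append_iff by simp
  then show "parent x \<noteq> x" using adj_irr by metis
  show "depth (parent x) < depth x" unfolding depth_def pre using len by simp
qed

lemma anc_parent: "x \<in> V \<Longrightarrow> x \<noteq> r \<Longrightarrow> anc x = insert x (anc (parent x)) \<and> x \<notin> anc (parent x)"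
  using tp_parent[of x] tpr(4)[of x] unfolding anc_def by (metis distinct_append set_append empty_set list.simps(15) 
       Un_insert_right sup_bot.right_neutral disjoint_iff list.set_intros(1) distinct.simps(2))

lemma anc_prefix: assumes y: "y \<in> V" and v: "v \<in> anc y"
  shows "\<exists>k < length (tp r y). v = tp r y ! k \<and> tp r v = take (Suc k) (tp r y)"
proof -
  obtain k where "k < length (tp r y)" "v = tp r y ! k" using v unfolding anc_def by (metis in_set_conv_nth)
  then show ?thesis using tp_prefix[OF y] by blast
qed

lemma anc_sub: "y \<in> V \<Longrightarrow> v \<in> anc y \<Longrightarrow> anc v \<subseteq> anc y"
  using anc_prefix[of y v] unfolding anc_def by (metis set_take_subset)

lemma anc_depth: assumes y: "y \<in> V" and v: "v \<in> anc y" and ne: "v \<noteq> y" shows "depth v < depth y"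
proof -
  obtain k where k: "k < length (tp r y)" "v = tp r y ! k" "tp r v = take (Suc k) (tp r y)"
    using anc_prefix[OF y v] by blast
  have "k \<noteq> length (tp r y) - 1" using k ne tpr(1,3)[OF y] by (metis last_conv_nth)
  then show ?thesis unfolding depth_def k(3) using k(1) by simp
qed

lemma anc_antisym: "x \<in> V \<Longrightarrow> y \<in> V \<Longrightarrow> x \<in> anc y \<Longrightarrow> y \<in> anc x \<Longrightarrow> x = y"
  by (metis anc_depth less_asym)

lemma anc_V': "y \<in> V \<Longrightarrow> v \<in> anc y \<Longrightarrow> v \<in> V" using anc_V by blast

lemma child_of:
  assumes u: "u \<in> V" and uv: "adj u v" and nv: "v \<notin> anc u"
  shows "v \<noteq> r \<and> parent v = u"
proof -
  have v: "v \<in> V" using adjV uv by blast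
  have "is_path V adj (tp r u @ [v]) r v"
    using tpr[OF u] nv uv v unfolding anc_def by (auto simp: is_path_alt successively_append_iff)
  then have e: "tp r v = tp r u @ [v]" by (rule tp_eq)
  have vr: "v \<noteq> r" using nv anc_root[OF u] by blast
  then have "tp r (parent v) = tp r u" using tp_parent(2)[OF v vr] e by simp
  then show ?thesis using tp_inj tp_parent(1)[OF v vr] u vr by blast
qed

lemma adj_cases: "adj a b \<Longrightarrow> (b \<noteq> r \<and> parent b = a) \<or> (a \<noteq> r \<and> parent a = b)"
proof -
  assume ab: "adj a b"
  then have a: "a \<in> V" and b: "b \<in> V" using adjV by auto
  show ?thesis
  proof (cases "b \<in> anc a")
    case False then show ?thesis using child_of[OF a ab] by blast
  next
    case True
    have "a \<noteq> b" using ab adj_irr by blast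
    then have "a \<notin> anc b" using anc_antisym[OF a b] True by blast
    then show ?thesis using child_of[OF b adj_sym[OF ab]] by blast
  qed
qed

lemma dedges_eq: "dedges V adj r = (\<lambda>v. (parent v, v)) ` (V - {r})"
proof
  show "dedges V adj r \<subseteq> (\<lambda>v. (parent v, v)) ` (V - {r})"
  proof
    fix e assume "e \<in> dedges V adj r"
    then obtain u v where e: "e = (u, v)" and uv: "adj u v" and op: "on_path V adj u r v"
      unfolding dedges_def by blast
    have u: "u \<in> V" and v: "v \<in> V" using adjV uv by auto
    have ua: "u \<in> anc v" using op on_path_iff[OF rV v] unfolding anc_def by blast
    have "u \<noteq> v" using uv adj_irr by blast
    then have "v \<notin> anc u" using anc_antisym[OF u v] ua by blast
    then have "v \<noteq> r \<and> parent v = u" using child_of[OF u uv] by blast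
    then show "e \<in> (\<lambda>v. (parent v, v)) ` (V - {r})" using e v by auto
  qed
next
  show "(\<lambda>v. (parent v, v)) ` (V - {r}) \<subseteq> dedges V adj r"
  proof
    fix e assume "e \<in> (\<lambda>v. (parent v, v)) ` (V - {r})"
    then obtain v where e: "e = (parent v, v)" and v: "v \<in> V" "v \<noteq> r" by blast
    have "parent v \<in> anc v" using anc_parent[OF v] anc_self tp_parent(1)[OF v] by blast
    then have "on_path V adj (parent v) r v" using on_path_iff[OF rV v(1)] unfolding anc_def by blast
    then show "e \<in> dedges V adj r" using e tp_parent(3)[OF v] unfolding dedges_def by blast
  qed
qed

lemma cross_edge:
  assumes v: "v \<in> V" "v \<noteq> r" and ab: "adj a b" and va: "v \<in> anc a" and vb: "v \<notin> anc b"
  shows "a = v \<and> b = parent v"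
proof -
  have a: "a \<in> V" and b: "b \<in> V" using adjV ab by auto
  from adj_cases[OF ab] show ?thesis
  proof
    assume h: "b \<noteq> r \<and> parent b = a"
    then have "anc b = insert b (anc a)" using anc_parent[OF b] by simp
    then show ?thesis using va vb by blast
  next
    assume h: "a \<noteq> r \<and> parent a = b"
    then have "anc a = insert a (anc b)" using anc_parent[OF a] by simp
    then show ?thesis using va vb h by auto
  qed
qed

lemma cross_walk:
  assumes w: "successively adj ps" and s: "set ps \<subseteq> V" and ne: "ps \<noteq> []"
    and v: "v \<in> V" "v \<noteq> r" and h: "v \<in> anc (hd ps)" and l: "v \<notin> anc (last ps)"
  shows "v \<in> set ps \<and> parent v \<in> set ps"
proof -
  obtain ys a b zs where ps: "ps = ys @ a # b # zs" and a: "v \<in> anc a" and b: "v \<notin> anc b"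
    using exit_list[OF ne, of "\<lambda>w. v \<in> anc w"] h l by blast
  have "successively adj (a # b # zs)" using w unfolding ps successively_append_iff by blast
  then have "adj a b" by simp
  then have "a = v \<and> b = parent v" using cross_edge[OF v] a b by blast
  then show ?thesis using ps by auto
qed

lemma v_not_anc_parent: "v \<in> V \<Longrightarrow> v \<noteq> r \<Longrightarrow> v \<notin> anc (parent v)"
  using anc_parent by blast

lemma convex_walk:
  assumes w: "successively adj ps" and d: "distinct ps" and s: "set ps \<subseteq> V" and ne: "ps \<noteq> []"
    and v: "v \<in> V" "v \<noteq> r" and eq: "(v \<in> anc (hd ps)) = (v \<in> anc (last ps))" and wi: "w \<in> set ps"
  shows "(v \<in> anc w) = (v \<in> anc (hd ps))"
proof (rule ccontr)
  assume ne': "(v \<in> anc w) \<noteq> (v \<in> anc (hd ps))"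
  obtain p1 p2 where ps: "ps = p1 @ w # p2" using wi split_list by metis
  have wA: "successively adj (p1 @ [w])" and wB: "successively adj (w # p2)"
  proof -
    have "successively adj ((p1 @ [w]) @ p2)" using w ps by simp
    then show "successively adj (p1 @ [w])" unfolding successively_append_iff by blast
    show "successively adj (w # p2)" using w unfolding ps successively_append_iff by blast
  qed
  have sA: "set (p1 @ [w]) \<subseteq> V" and sB: "set (w # p2) \<subseteq> V" using s ps by auto
  have hA: "hd (p1 @ [w]) = hd ps" using ps by (cases p1) auto
  have lB: "last (w # p2) = last ps" using ps by (cases p2 rule: rev_cases) auto
  have dd: "distinct (p1 @ w # p2)" using d ps by simp
  have vv: "v \<in> anc v" using anc_self v by blast
  have pv: "v \<notin> anc (parent v)" using v_not_anc_parent v by blast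
  show False
  proof (cases "v \<in> anc (hd ps)")
    case True
    then have wo: "v \<notin> anc w" using ne' by blast
    have "v \<in> set (p1 @ [w])" using cross_walk[OF wA sA _ v] True hA wo by simp
    moreover have "v \<in> set (rev (w # p2))"
    proof -
      have a1: "successively adj (rev (w # p2))" using wB succ_sym by blast
      have a2: "hd (rev (w # p2)) = last ps" "last (rev (w # p2)) = w" using lB by (cases p2 rule: rev_cases; simp)+
      show ?thesis using cross_walk[OF a1 _ _ v] sB a2 True eq wo by simp
    qed
    moreover have "v \<noteq> w" using vv wo by blast
    ultimately show False using dd by auto
  next
    case False
    then have wo: "v \<in> anc w" using ne' by blast
    have "parent v \<in> set (rev (p1 @ [w]))"
    proof -
      have a1: "successively adj (rev (p1 @ [w]))" using wA succ_sym by blast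
      have a2: "hd (rev (p1 @ [w])) = w" "last (rev (p1 @ [w])) = hd ps" using hA by (cases p1; simp)+
      show ?thesis using cross_walk[OF a1 _ _ v] sA a2 False wo by simp
    qed
    moreover have "parent v \<in> set (w # p2)"
      using cross_walk[OF wB sB _ v] False eq lB wo by simp
    moreover have "parent v \<noteq> w" using pv wo by blast
    ultimately show False using dd by auto
  qed
qed

lemma tpxy: assumes "x \<in> V" "y \<in> V"
  shows "tp x y \<noteq> []" "hd (tp x y) = x" "last (tp x y) = y" "distinct (tp x y)" "set (tp x y) \<subseteq> V"
    "successively adj (tp x y)"
  using tp[OF assms] by (simp_all add: is_path_alt)

lemma convex_path:
  assumes x: "x \<in> V" and y: "y \<in> V" and v: "v \<in> V" "v \<noteq> r" and eq: "(v \<in> anc x) = (v \<in> anc y)"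
    and op: "on_path V adj w x y"
  shows "(v \<in> anc w) = (v \<in> anc x)"
  using convex_walk[OF tpxy(6,4,5,1)[OF x y] v] tpxy(2,3)[OF x y] eq op on_path_iff[OF x y] by simp

lemma cross_path:
  assumes x: "x \<in> V" and y: "y \<in> V" and v: "v \<in> V" "v \<noteq> r" and ne: "(v \<in> anc x) \<noteq> (v \<in> anc y)"
  shows "on_path V adj v x y \<and> on_path V adj (parent v) x y"
proof (cases "v \<in> anc x")
  case True
  then show ?thesis using cross_walk[OF tpxy(6,5,1)[OF x y] v] tpxy(2,3)[OF x y] ne on_path_iff[OF x y] by simp
next
  case False
  then have "on_path V adj v y x \<and> on_path V adj (parent v) y x"
    using cross_walk[OF tpxy(6,5,1)[OF y x] v] tpxy(2,3)[OF y x] ne on_path_iff[OF y x] by simp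
  then show ?thesis using on_path_sym by blast
qed

lemma has_child:
  assumes y: "y \<in> V" and xa: "x \<in> anc y" and ne: "x \<noteq> y"
  shows "\<exists>c. c \<in> V \<and> c \<noteq> r \<and> parent c = x \<and> c \<in> anc y"
proof -
  obtain k where k: "k < length (tp r y)" "x = tp r y ! k" "tp r x = take (Suc k) (tp r y)"
    using anc_prefix[OF y xa] by blast
  have k1: "Suc k < length (tp r y)"
  proof (rule ccontr)
    assume "\<not> ?thesis"
    then have "k = length (tp r y) - 1" using k(1) by simp
    then show False using k(2) ne tpr(1,3)[OF y] by (metis last_conv_nth)
  qed
  define c where "c = tp r y ! Suc k"
  have cV: "c \<in> V" using k1 tpr(5)[OF y] unfolding c_def by (meson nth_mem subsetD)
  have tc: "tp r c = take (Suc (Suc k)) (tp r y)" using tp_prefix[OF y k1] unfolding c_def by simp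
  have cr: "c \<noteq> r"
  proof
    assume "c = r"
    then have "tp r c = [r]" using tp_rr by simp
    then have "length (take (Suc (Suc k)) (tp r y)) = 1" using tc by simp
    with k1 show False by simp
  qed
  have "tp r c = tp r x @ [c]" using tc k(3) k1 unfolding c_def by (simp add: take_Suc_conv_app_nth)
  then have "tp r (parent c) = tp r x" using tp_parent(2)[OF cV cr] by simp
  then have "parent c = x" using tp_inj tp_parent(1)[OF cV cr] anc_V'[OF y xa] by blast
  moreover have "c \<in> anc y" using k1 unfolding anc_def c_def by simp
  ultimately show ?thesis using cV cr by blast
qed

lemma two_nbrs:
  assumes "a \<in> neighbours V adj x" "b \<in> neighbours V adj x" "a \<noteq> b"
  shows "x \<notin> leaves V adj"
proof -
  have "finite (neighbours V adj x)" using finV unfolding neighbours_def by simp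
  then have "card {a, b} \<le> card (neighbours V adj x)" using assms by (intro card_mono) auto
  then show ?thesis using assms(3) unfolding leaves_def by auto
qed

lemma leaf_no_child:
  assumes i: "i \<in> leaves V adj" "i \<noteq> r" and c: "c \<in> V" "c \<noteq> r" "parent c = i"
  shows False
proof -
  have iV: "i \<in> V" using i unfolding leaves_def by blast
  have "adj i c" using tp_parent(3)[OF c(1,2)] c(3) by simp
  then have n1: "c \<in> neighbours V adj i" using c unfolding neighbours_def by simp
  have "adj i (parent i)" using tp_parent(3)[OF iV i(2)] adj_sym by blast
  then have n2: "parent i \<in> neighbours V adj i" using tp_parent(1)[OF iV i(2)] unfolding neighbours_def by simp
  have "c \<noteq> parent i"
  proof
    assume h: "c = parent i"
    have "depth i < depth c" using tp_parent(5)[OF c(1,2)] c(3) by simp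
    moreover have "depth (parent i) < depth i" using tp_parent(5)[OF iV i(2)] .
    ultimately show False using h by simp
  qed
  then show False using two_nbrs[OF n1 n2] i by blast
qed

lemma leaf_not_anc:
  assumes i: "i \<in> leaves V adj" "i \<noteq> r" and j: "j \<in> V" "j \<noteq> i"
  shows "i \<notin> anc j"
  using has_child[OF j(1) _ j(2)[symmetric]] leaf_no_child[OF i] by blast

lemma root_child_unique:
  assumes rl: "r \<in> leaves V adj" and c: "c \<in> V" "c \<noteq> r" "parent c = r" and d: "d \<in> V" "d \<noteq> r" "parent d = r"
  shows "c = d"
proof (rule ccontr)
  assume "c \<noteq> d"
  moreover have "c \<in> neighbours V adj r" using tp_parent(3)[OF c(1,2)] c unfolding neighbours_def by simp
  moreover have "d \<in> neighbours V adj r" using tp_parent(3)[OF d(1,2)] d unfolding neighbours_def by simp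
  ultimately show False using two_nbrs rl by blast
qed

lemma root_child_anc:
  assumes rl: "r \<in> leaves V adj" and c: "c \<in> V" "c \<noteq> r" "parent c = r" and x: "x \<in> V" "x \<noteq> r"
  shows "c \<in> anc x"
proof -
  obtain d where "d \<in> V" "d \<noteq> r" "parent d = r" "d \<in> anc x"
    using has_child[OF x(1) anc_root[OF x(1)] x(2)[symmetric]] by blast
  then show ?thesis using root_child_unique[OF rl c] by metis
qed

end



context rtree begin

lemma leavesV: "leaves V adj \<subseteq> V" unfolding leaves_def by blast

definition Gs :: "('v \<Rightarrow> nuc) \<Rightarrow> 'v \<Rightarrow> nuc" where
  "Gs g v = (\<Sum>x\<in>{x\<in>leaves V adj. v \<in> anc x}. g x)"

definition S0 :: "('v \<Rightarrow> nuc) set" where "S0 = {\<sigma> \<in> V \<rightarrow>\<^sub>E UNIV. \<sigma> r = 0}"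

definition W :: "('v \<times> 'v \<Rightarrow> nuc \<Rightarrow> real) \<Rightarrow> ('v \<Rightarrow> nuc) \<Rightarrow> real" where
  "W psi \<sigma> = (\<Prod>v\<in>V-{r}. Fm psi (parent v, v) (\<sigma> v - \<sigma> (parent v)))"

lemma finS0: "finite S0" unfolding S0_def using finV by (intro finite_subset[OF _ finite_PiE]) auto

lemma pprob_W: "pprob V adj r psi h = (\<Sum>\<sigma>\<in>{\<sigma>\<in>S0. \<forall>x\<in>leaves V adj. \<sigma> x = h x}. W psi \<sigma>)"
proof -
  have inj: "inj_on (\<lambda>v. (parent v, v)) (V - {r})" by (rule inj_onI) auto
  have "\<And>\<sigma>. (\<Prod>e\<in>dedges V adj r. Pm psi e (\<sigma> (fst e)) (\<sigma> (snd e))) = W psi \<sigma>"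
    unfolding dedges_eq W_def by (simp add: prod.reindex[OF inj] Pm_Fm)
  then show ?thesis unfolding pprob_def S0_def by (simp add: conj_assoc)
qed

lemma qfour_S0: "qfour V adj r psi g = (\<Sum>\<sigma>\<in>S0. (\<Prod>x\<in>leaves V adj. chi (g x) (\<sigma> x)) * W psi \<sigma>)"
proof -
  let ?L = "leaves V adj"
  let ?T = "?L \<rightarrow>\<^sub>E (UNIV :: nuc set)"
  let ?f = "\<lambda>\<sigma>. (\<Prod>x\<in>?L. chi (g x) (\<sigma> x)) * W psi \<sigma>"
  have finL: "finite ?L" using finV leavesV finite_subset by blast
  have "qfour V adj r psi g = (\<Sum>h\<in>?T. \<Sum>\<sigma>\<in>{\<sigma>\<in>S0. restrict \<sigma> ?L = h}. ?f \<sigma>)"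
    unfolding qfour_def
  proof (intro sum.cong refl)
    fix h assume h: "h \<in> ?T"
    have fib: "{\<sigma>\<in>S0. restrict \<sigma> ?L = h} = {\<sigma>\<in>S0. \<forall>x\<in>?L. \<sigma> x = h x}"
      using h by (auto simp: restrict_def PiE_def extensional_def fun_eq_iff)
    have "(\<Prod>x\<in>?L. chi (g x) (h x)) * pprob V adj r psi h
       = (\<Sum>\<sigma>\<in>{\<sigma>\<in>S0. \<forall>x\<in>?L. \<sigma> x = h x}. (\<Prod>x\<in>?L. chi (g x) (h x)) * W psi \<sigma>)"
      unfolding pprob_W by (simp add: sum_distrib_left)
    also have "\<dots> = (\<Sum>\<sigma>\<in>{\<sigma>\<in>S0. \<forall>x\<in>?L. \<sigma> x = h x}. ?f \<sigma>)"
      by (intro sum.cong refl) auto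
    finally show "(\<Prod>x\<in>?L. chi (g x) (h x)) * pprob V adj r psi h = (\<Sum>\<sigma>\<in>{\<sigma>\<in>S0. restrict \<sigma> ?L = h}. ?f \<sigma>)"
      using fib by simp
  qed
  also have "\<dots> = (\<Sum>\<sigma>\<in>S0. ?f \<sigma>)"
    by (rule sum.group[OF finS0]) (use finL in \<open>auto intro: finite_PiE\<close>)
  finally show ?thesis .
qed

definition bwd :: "('v \<Rightarrow> nuc) \<Rightarrow> 'v \<Rightarrow> nuc" where
  "bwd \<tau> = (\<lambda>x\<in>V. \<Sum>v\<in>anc x - {r}. \<tau> v)"
definition fwd :: "('v \<Rightarrow> nuc) \<Rightarrow> 'v \<Rightarrow> nuc" where
  "fwd \<sigma> = (\<lambda>v\<in>V - {r}. \<sigma> v - \<sigma> (parent v))"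

lemma financ: "x \<in> V \<Longrightarrow> finite (anc x)" using anc_V finV finite_subset by blast

lemma anc_minus: "x \<in> V \<Longrightarrow> x \<noteq> r \<Longrightarrow> anc x - {r} = insert x (anc (parent x) - {r}) \<and> x \<notin> anc (parent x) - {r}"
  using anc_parent by blast

lemma sum_anc_tel:
  fixes \<sigma> :: "'v \<Rightarrow> nuc"
  assumes s: "\<sigma> r = 0"
  shows "x \<in> V \<Longrightarrow> (\<Sum>v\<in>anc x - {r}. \<sigma> v - \<sigma> (parent v)) = \<sigma> x"
proof (induction "depth x" arbitrary: x rule: less_induct)
  case less
  show ?case
  proof (cases "x = r")
    case True then show ?thesis using s by (simp add: anc_r)
  next
    case False
    have p: "parent x \<in> V" using tp_parent(1)[OF less.prems False] .
    have "(\<Sum>v\<in>anc x - {r}. \<sigma> v - \<sigma> (parent v)) = (\<sigma> x - \<sigma> (parent x)) + (\<Sum>v\<in>anc (parent x) - {r}. \<sigma> v - \<sigma> (parent v))"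
    proof -
      have e: "anc x - {r} = insert x (anc (parent x) - {r})" and n: "x \<notin> anc (parent x) - {r}"
        using anc_minus[OF less.prems False] by blast+
      have f: "finite (anc (parent x) - {r})" using financ[OF p] by blast
      show ?thesis unfolding e using sum.insert[OF f n] by simp
    qed
    also have "\<dots> = \<sigma> x"
    proof -
      have "(\<Sum>v\<in>anc (parent x) - {r}. \<sigma> v - \<sigma> (parent v)) = \<sigma> (parent x)"
        using less.hyps[OF tp_parent(5)[OF less.prems False] p] .
      then show ?thesis by (simp only: diff_add_cancel)
    qed
    finally show ?thesis .
  qed
qed

lemma bwd_fwd: "\<sigma> \<in> S0 \<Longrightarrow> bwd (fwd \<sigma>) = \<sigma>"
proof
  fix x assume s: "\<sigma> \<in> S0"
  show "bwd (fwd \<sigma>) x = \<sigma> x"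
  proof (cases "x \<in> V")
    case True
    have "(\<Sum>v\<in>anc x - {r}. fwd \<sigma> v) = (\<Sum>v\<in>anc x - {r}. \<sigma> v - \<sigma> (parent v))"
      using anc_V[OF True] by (intro sum.cong refl) (auto simp: fwd_def)
    then show ?thesis using sum_anc_tel[of \<sigma> x] s True by (simp add: bwd_def S0_def)
  next
    case False then show ?thesis using s by (simp add: bwd_def S0_def PiE_def extensional_def)
  qed
qed

lemma bwd_diff: "v \<in> V \<Longrightarrow> v \<noteq> r \<Longrightarrow> bwd \<tau> v - bwd \<tau> (parent v) = \<tau> v"
proof -
  assume v: "v \<in> V" "v \<noteq> r"
  have p: "parent v \<in> V" using tp_parent(1)[OF v] .
  have "bwd \<tau> v = \<tau> v + bwd \<tau> (parent v)"
  proof -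
    have e: "anc v - {r} = insert v (anc (parent v) - {r})" and n: "v \<notin> anc (parent v) - {r}"
      using anc_minus[OF v] by blast+
    have f: "finite (anc (parent v) - {r})" using financ[OF p] by blast
    show ?thesis unfolding bwd_def using v p e sum.insert[OF f n] by simp
  qed
  then show ?thesis by (simp only: add_diff_cancel)
qed

lemma fwd_bwd: "\<tau> \<in> (V - {r}) \<rightarrow>\<^sub>E UNIV \<Longrightarrow> fwd (bwd \<tau>) = \<tau>"
proof
  fix v assume t: "\<tau> \<in> (V - {r}) \<rightarrow>\<^sub>E UNIV"
  show "fwd (bwd \<tau>) v = \<tau> v"
  proof (cases "v \<in> V - {r}")
    case True then show ?thesis using bwd_diff[of v \<tau>] by (simp add: fwd_def)
  next
    case False then show ?thesis using t by (auto simp: fwd_def PiE_def extensional_def)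
  qed
qed

lemma bwd_S0: "bwd \<tau> \<in> S0"
  unfolding S0_def bwd_def using rV by (simp add: anc_r)

lemma fwd_PiE: "fwd \<sigma> \<in> (V - {r}) \<rightarrow>\<^sub>E UNIV"
  unfolding fwd_def by simp

theorem qfour_formula:
  "qfour V adj r psi g = (\<Prod>v\<in>V-{r}. exp (lam psi (parent v, v) (Gs g v)))"
proof -
  let ?L = "leaves V adj"
  let ?f = "\<lambda>\<sigma>. (\<Prod>x\<in>?L. chi (g x) (\<sigma> x)) * W psi \<sigma>"
  let ?P = "(V - {r}) \<rightarrow>\<^sub>E (UNIV :: nuc set)"
  have finL: "finite ?L" using finV leavesV finite_subset by blast
  have "qfour V adj r psi g = (\<Sum>\<tau>\<in>?P. ?f (bwd \<tau>))"
    unfolding qfour_S0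
  proof (rule sum.reindex_bij_witness[where i = bwd and j = fwd])
    show "\<And>a. a \<in> S0 \<Longrightarrow> bwd (fwd a) = a" by (rule bwd_fwd)
    show "\<And>a. a \<in> S0 \<Longrightarrow> fwd a \<in> ?P" by (rule fwd_PiE)
    show "\<And>b. b \<in> ?P \<Longrightarrow> fwd (bwd b) = b" by (rule fwd_bwd)
    show "\<And>b. b \<in> ?P \<Longrightarrow> bwd b \<in> S0" by (rule bwd_S0)
    show "\<And>a. a \<in> S0 \<Longrightarrow> ?f (bwd (fwd a)) = ?f a" by (simp only: bwd_fwd)
  qed
  also have "\<dots> = (\<Sum>\<tau>\<in>?P. \<Prod>v\<in>V-{r}. chi (Gs g v) (\<tau> v) * Fm psi (parent v, v) (\<tau> v))"
  proof (intro sum.cong refl)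
    fix \<tau> assume t: "\<tau> \<in> ?P"
    have w: "W psi (bwd \<tau>) = (\<Prod>v\<in>V-{r}. Fm psi (parent v, v) (\<tau> v))"
      unfolding W_def by (intro prod.cong refl) (simp add: bwd_diff)
    have "(\<Prod>x\<in>?L. chi (g x) (bwd \<tau> x)) = (\<Prod>x\<in>?L. \<Prod>v\<in>{v\<in>V-{r}. v \<in> anc x}. chi (g x) (\<tau> v))"
    proof (intro prod.cong refl)
      fix x assume x: "x \<in> ?L"
      then have xV: "x \<in> V" using leavesV by blast
      have "anc x - {r} = {v\<in>V-{r}. v \<in> anc x}" using anc_V[OF xV] by blast
      then show "chi (g x) (bwd \<tau> x) = (\<Prod>v\<in>{v\<in>V-{r}. v \<in> anc x}. chi (g x) (\<tau> v))"
        using xV finV by (simp add: bwd_def chi_sum2)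
    qed
    also have "\<dots> = (\<Prod>v\<in>V-{r}. \<Prod>x\<in>{x\<in>?L. v \<in> anc x}. chi (g x) (\<tau> v))"
      using finL finV by (intro prod.swap_restrict) auto
    also have "\<dots> = (\<Prod>v\<in>V-{r}. chi (Gs g v) (\<tau> v))"
      unfolding Gs_def using finL by (intro prod.cong refl) (simp add: chi_sum1)
    finally show "?f (bwd \<tau>) = (\<Prod>v\<in>V-{r}. chi (Gs g v) (\<tau> v) * Fm psi (parent v, v) (\<tau> v))"
      using w by (simp add: prod.distrib)
  qed
  also have "\<dots> = (\<Prod>v\<in>V-{r}. \<Sum>t\<in>UNIV. chi (Gs g v) t * Fm psi (parent v, v) t)"
    using finV by (intro prod_sum_PiE[symmetric]) auto
  also have "\<dots> = (\<Prod>v\<in>V-{r}. exp (lam psi (parent v, v) (Gs g v)))"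
    by (simp add: Fm_hat)
  finally show ?thesis .
qed

end



lemma if_h_add: "(if P then (h::nuc) else 0) + (if Q then h else 0) = (if P \<noteq> Q then h else 0)"
  by (cases P; cases Q; simp)

lemma lam_if: "lam psi e (if P then h else 0) = (if P then lam psi e h else 0)"
  by (cases P; simp)

context rtree begin

abbreviation "L \<equiv> leaves V adj"

lemma delta_sum: "finite S \<Longrightarrow> (\<Sum>x\<in>S. if x = i then (a::nuc) else 0) = (if i \<in> S then a else 0)"
  by (simp add: sum.delta)

lemma Gs_lab3:
  assumes "i \<in> L" "j \<in> L" "k \<in> L" "i \<noteq> j" "i \<noteq> k" "j \<noteq> k"
  shows "Gs (lab3 i j k a b c) v = (if v \<in> anc i then a else 0) + (if v \<in> anc j then b else 0) + (if v \<in> anc k then c else 0)"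
proof -
  let ?S = "{x\<in>L. v \<in> anc x}"
  have fin: "finite ?S" by (rule finite_subset[OF _ finV]) (use leavesV in blast)
  have "lab3 i j k a b c = (\<lambda>x. (if x = i then a else 0) + (if x = j then b else 0) + (if x = k then c else 0))"
  proof
    fix x show "lab3 i j k a b c x = (if x = i then a else 0) + (if x = j then b else 0) + (if x = k then c else 0)"
      using assms unfolding lab3_def by (cases "x = i"; cases "x = j"; cases "x = k"; simp)
  qed
  then have "Gs (lab3 i j k a b c) v = (\<Sum>x\<in>?S. if x = i then a else 0) + (\<Sum>x\<in>?S. if x = j then b else 0) + (\<Sum>x\<in>?S. if x = k then c else 0)"
    unfolding Gs_def by (simp add: sum.distrib)
  also have "\<dots> = (if v \<in> anc i then a else 0) + (if v \<in> anc j then b else 0) + (if v \<in> anc k then c else 0)"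
    using assms by (simp only: delta_sum[OF fin]) simp
  finally show ?thesis .
qed

lemma Gs_lab4:
  assumes "i \<in> L" "j \<in> L" "k \<in> L" "l \<in> L" "i \<noteq> j" "i \<noteq> k" "i \<noteq> l" "j \<noteq> k" "j \<noteq> l" "k \<noteq> l"
  shows "Gs (lab4 i j k l a b c d) v = (if v \<in> anc i then a else 0) + (if v \<in> anc j then b else 0)
     + (if v \<in> anc k then c else 0) + (if v \<in> anc l then d else 0)"
proof -
  let ?S = "{x\<in>L. v \<in> anc x}"
  have fin: "finite ?S" by (rule finite_subset[OF _ finV]) (use leavesV in blast)
  have "lab4 i j k l a b c d = (\<lambda>x. (if x = i then a else 0) + (if x = j then b else 0) + (if x = k then c else 0) + (if x = l then d else 0))"
  proof
    fix x show "lab4 i j k l a b c d x = (if x = i then a else 0) + (if x = j then b else 0) + (if x = k then c else 0) + (if x = l then d else 0)"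
      using assms unfolding lab4_def by (cases "x = i"; cases "x = j"; cases "x = k"; cases "x = l"; simp)
  qed
  then have "Gs (lab4 i j k l a b c d) v = (\<Sum>x\<in>?S. if x = i then a else 0) + (\<Sum>x\<in>?S. if x = j then b else 0)
      + (\<Sum>x\<in>?S. if x = k then c else 0) + (\<Sum>x\<in>?S. if x = l then d else 0)"
    unfolding Gs_def by (simp add: sum.distrib)
  also have "\<dots> = (if v \<in> anc i then a else 0) + (if v \<in> anc j then b else 0)
     + (if v \<in> anc k then c else 0) + (if v \<in> anc l then d else 0)"
    using assms by (simp only: delta_sum[OF fin]) simp
  finally show ?thesis .
qed

definition Dd :: "('v \<times> 'v \<Rightarrow> nuc \<Rightarrow> real) \<Rightarrow> nuc \<Rightarrow> 'v \<Rightarrow> 'v \<Rightarrow> real" where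
  "Dd psi h x y = (\<Sum>v\<in>V-{r}. if (v \<in> anc x) \<noteq> (v \<in> anc y) then lam psi (parent v, v) h else 0)"

lemma q_D:
  assumes "\<forall>v\<in>V-{r}. Gs g v = (if (v \<in> anc x) \<noteq> (v \<in> anc y) then h else 0)"
  shows "qfour V adj r psi g = exp (Dd psi h x y)"
proof -
  have "qfour V adj r psi g = (\<Prod>v\<in>V-{r}. exp (if (v \<in> anc x) \<noteq> (v \<in> anc y) then lam psi (parent v, v) h else 0))"
    unfolding qfour_formula using assms by (intro prod.cong refl) (simp add: lam_if)
  then show ?thesis unfolding Dd_def using finV by (simp add: exp_sum)
qed

lemma q_pos: "qfour V adj r psi g > 0"
  unfolding qfour_formula by (rule prod_pos) simp

lemma leaves_small:
  assumes rL: "r \<in> L" and v0: "v0 \<in> V" "v0 \<noteq> r" "parent v0 = r" and v0L: "v0 \<in> L"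
  shows "card L \<le> 2"
proof -
  have "L \<subseteq> {r, v0}"
  proof
    fix x assume xL: "x \<in> L"
    then have xV: "x \<in> V" using leavesV by blast
    show "x \<in> {r, v0}"
    proof (rule ccontr)
      assume "x \<notin> {r, v0}"
      then have "v0 \<in> anc x" "x \<noteq> v0" using root_child_anc[OF rL v0 xV] by auto
      then show False using leaf_not_anc[OF v0L v0(2) xV] by blast
    qed
  qed
  then have "card L \<le> card {r, v0}" by (intro card_mono) auto
  also have "\<dots> \<le> 2" by (simp add: card_insert_if)
  finally show ?thesis .
qed

lemma on_path_same: "x \<in> V \<Longrightarrow> on_path V adj w x x \<Longrightarrow> w = x"
proof -
  assume x: "x \<in> V" and op: "on_path V adj w x x"
  have "tp x x = [x]" by (rule tp_eq) (simp add: is_path_alt x)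
  then show ?thesis using op on_path_iff[OF x x] by simp
qed

lemma anc_leaf_in_V: "x \<in> L \<Longrightarrow> x \<in> V" using leavesV by blast


lemma pend_comb:
  assumes cond: "\<forall>v\<in>V-{r}. ((v \<in> anc i) \<noteq> (v \<in> anc j) \<and> (v \<in> anc i) \<noteq> (v \<in> anc k)) = (v = v0)"
    and v0: "v0 \<in> V" "v0 \<noteq> r"
  shows "Dd psi h i j + Dd psi h i k = 2 * lam psi (parent v0, v0) h + Dd psi h j k"
proof -
  let ?l = "\<lambda>v. lam psi (parent v, v) h"
  have "Dd psi h i j + Dd psi h i k - Dd psi h j k
     = (\<Sum>v\<in>V-{r}. (if (v \<in> anc i) \<noteq> (v \<in> anc j) then ?l v else 0) + (if (v \<in> anc i) \<noteq> (v \<in> anc k) then ?l v else 0)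
          - (if (v \<in> anc j) \<noteq> (v \<in> anc k) then ?l v else 0))"
    unfolding Dd_def by (simp add: sum.distrib sum_subtractf)
  also have "\<dots> = (\<Sum>v\<in>V-{r}. if v = v0 then 2 * ?l v else 0)"
  proof (intro sum.cong refl)
    fix v assume v: "v \<in> V - {r}"
    have c: "((v \<in> anc i) \<noteq> (v \<in> anc j) \<and> (v \<in> anc i) \<noteq> (v \<in> anc k)) = (v = v0)" using cond v by blast
    show "(if (v \<in> anc i) \<noteq> (v \<in> anc j) then ?l v else 0) + (if (v \<in> anc i) \<noteq> (v \<in> anc k) then ?l v else 0)
          - (if (v \<in> anc j) \<noteq> (v \<in> anc k) then ?l v else 0) = (if v = v0 then 2 * ?l v else 0)"
      using c by (cases "v \<in> anc i"; cases "v \<in> anc j"; cases "v \<in> anc k"; simp)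
  qed
  also have "\<dots> = 2 * ?l v0" using finV v0 by simp
  finally show ?thesis by simp
qed

lemma int_comb:
  assumes v0: "v0 \<in> V" "v0 \<noteq> r"
    and at0: "v0 \<notin> anc i" "v0 \<notin> anc j" "v0 \<in> anc i'" "v0 \<in> anc j'"
    and oth: "\<forall>v\<in>V-{r}. v \<noteq> v0 \<longrightarrow> \<not> ((v \<in> anc i) \<noteq> (v \<in> anc j) \<and> (v \<in> anc i') \<noteq> (v \<in> anc j'))
        \<and> ((v \<in> anc i) = (v \<in> anc j) \<and> (v \<in> anc i') = (v \<in> anc j') \<longrightarrow> (v \<in> anc i) = (v \<in> anc i'))"
  shows "Dd psi h i i' + Dd psi h j j' = 2 * lam psi (parent v0, v0) h + (Dd psi h i j + Dd psi h i' j')"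
proof -
  let ?l = "\<lambda>v. lam psi (parent v, v) h"
  have "Dd psi h i i' + Dd psi h j j' - (Dd psi h i j + Dd psi h i' j')
     = (\<Sum>v\<in>V-{r}. (if (v \<in> anc i) \<noteq> (v \<in> anc i') then ?l v else 0) + (if (v \<in> anc j) \<noteq> (v \<in> anc j') then ?l v else 0)
          - ((if (v \<in> anc i) \<noteq> (v \<in> anc j) then ?l v else 0) + (if (v \<in> anc i') \<noteq> (v \<in> anc j') then ?l v else 0)))"
    unfolding Dd_def by (simp add: sum.distrib sum_subtractf)
  also have "\<dots> = (\<Sum>v\<in>V-{r}. if v = v0 then 2 * ?l v else 0)"
  proof (intro sum.cong refl)
    fix v assume v: "v \<in> V - {r}"
    show "(if (v \<in> anc i) \<noteq> (v \<in> anc i') then ?l v else 0) + (if (v \<in> anc j) \<noteq> (v \<in> anc j') then ?l v else 0)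
          - ((if (v \<in> anc i) \<noteq> (v \<in> anc j) then ?l v else 0) + (if (v \<in> anc i') \<noteq> (v \<in> anc j') then ?l v else 0))
          = (if v = v0 then 2 * ?l v else 0)"
    proof (cases "v = v0")
      case True then show ?thesis using at0 by simp
    next
      case False
      then have c: "\<not> ((v \<in> anc i) \<noteq> (v \<in> anc j) \<and> (v \<in> anc i') \<noteq> (v \<in> anc j'))"
        "(v \<in> anc i) = (v \<in> anc j) \<and> (v \<in> anc i') = (v \<in> anc j') \<longrightarrow> (v \<in> anc i) = (v \<in> anc i')"
        using oth v by blast+
      then show ?thesis using False
        by (cases "v \<in> anc i"; cases "v \<in> anc j"; cases "v \<in> anc i'"; cases "v \<in> anc j'"; simp)
    qed
  qed
  also have "\<dots> = 2 * ?l v0" using finV v0 by simp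
  finally show ?thesis by simp
qed

end



context rtree begin

lemma q3_pend:
  assumes "i \<in> L" "j \<in> L" "k \<in> L" "i \<noteq> j" "i \<noteq> k" "j \<noteq> k"
  shows "qfour V adj r psi (lab3 i j k h h nA) = exp (Dd psi h i j)"
    "qfour V adj r psi (lab3 i j k h nA h) = exp (Dd psi h i k)"
    "qfour V adj r psi (lab3 i j k nA h h) = exp (Dd psi h j k)"
  by (rule q_D; simp add: Gs_lab3[OF assms] if_h_add)+

lemma q4_int:
  assumes "i \<in> L" "j \<in> L" "k \<in> L" "l \<in> L" "i \<noteq> j" "i \<noteq> k" "i \<noteq> l" "j \<noteq> k" "j \<noteq> l" "k \<noteq> l"
  shows "qfour V adj r psi (lab4 i j k l h nA h nA) = exp (Dd psi h i k)"
    "qfour V adj r psi (lab4 i j k l nA h nA h) = exp (Dd psi h j l)"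
    "qfour V adj r psi (lab4 i j k l h h nA nA) = exp (Dd psi h i j)"
    "qfour V adj r psi (lab4 i j k l nA nA h h) = exp (Dd psi h k l)"
  by (rule q_D; simp add: Gs_lab4[OF assms] if_h_add)+

lemma edge_R:
  assumes rL: "r \<in> L" and m3: "3 \<le> card L" and e: "e \<in> dedges V adj r"
    and adm: "admissible V adj e s1 s2 s3 s4"
  shows "0 < Rden V adj r psi e s1 s2 s3 s4 h \<and>
     Rnum V adj r psi e s1 s2 s3 s4 h = exp (2 * lam psi e h) * Rden V adj r psi e s1 s2 s3 s4 h"
proof -
  obtain v0 where v0: "v0 \<in> V" "v0 \<noteq> r" and ev: "e = (parent v0, v0)"
    using e unfolding dedges_eq by blast
  let ?u = "parent v0"
  have uV: "?u \<in> V" using tp_parent(1)[OF v0] .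
  have ancv0: "anc v0 = insert v0 (anc ?u)" "v0 \<notin> anc ?u" using anc_parent[OF v0] by blast+
  show ?thesis
  proof (cases "is_pendant V adj e")
    case True
    obtain i where i: "i \<in> L" "s1 \<in> L" "s2 \<in> L" "i \<noteq> s1" "i \<noteq> s2" "s1 \<noteq> s2"
      and pl: "pend_leaf V adj e = i"
      and cond: "\<forall>v\<in>V-{r}. ((v \<in> anc i) \<noteq> (v \<in> anc s1) \<and> (v \<in> anc i) \<noteq> (v \<in> anc s2)) = (v = v0)"
    proof (cases "v0 \<in> L")
      case v0L: True
      have pl: "pend_leaf V adj e = v0" "pend_inner V adj e = ?u"
        using v0L ev by (simp_all add: pend_leaf_def pend_inner_def)
      have a: "s1 \<in> L" "s2 \<in> L" "s1 \<noteq> v0" "s2 \<noteq> v0" "on_path V adj ?u s1 s2"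
        using adm True pl unfolding admissible_def by auto
      have s1V: "s1 \<in> V" and s2V: "s2 \<in> V" using a leavesV by auto
      have ne: "s1 \<noteq> s2"
      proof
        assume "s1 = s2"
        then have us: "?u = s1" using on_path_same[OF s1V] a(5) by simp
        have ur: "?u = r"
        proof (rule ccontr)
          assume "?u \<noteq> r"
          then show False using leaf_no_child[of ?u v0] a(1) us v0 by blast
        qed
        then show False using leaves_small[OF rL v0 ur v0L] m3 by simp
      qed
      have c: "\<forall>v\<in>V-{r}. ((v \<in> anc v0) \<noteq> (v \<in> anc s1) \<and> (v \<in> anc v0) \<noteq> (v \<in> anc s2)) = (v = v0)"
      proof
        fix v assume v: "v \<in> V - {r}"
        show "((v \<in> anc v0) \<noteq> (v \<in> anc s1) \<and> (v \<in> anc v0) \<noteq> (v \<in> anc s2)) = (v = v0)"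
        proof (cases "v = v0")
          case True
          have "v0 \<notin> anc s1" "v0 \<notin> anc s2" using leaf_not_anc[OF v0L v0(2)] s1V s2V a(3,4) by auto
          then show ?thesis using True anc_self[OF v0(1)] by simp
        next
          case False
          have vu: "(v \<in> anc v0) = (v \<in> anc ?u)" using ancv0 False by blast
          show ?thesis
          proof (rule ccontr)
            assume "\<not> ?thesis"
            then have d: "(v \<in> anc ?u) \<noteq> (v \<in> anc s1)" "(v \<in> anc s1) = (v \<in> anc s2)" using False vu by auto
            have "(v \<in> anc ?u) = (v \<in> anc s1)" using convex_path[OF s1V s2V _ _ d(2) a(5)] v by blast
            then show False using d(1) by blast
          qed
        qed
      qed
      show ?thesis by (rule that[of v0]) (use a ne v0L c pl in auto)
    next
      case v0L: False
      then have uL: "?u \<in> L" using True ev unfolding is_pendant_def by simp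
      have ur: "?u = r"
      proof (rule ccontr)
        assume "?u \<noteq> r"
        then show False using leaf_no_child[of ?u v0] uL v0 by blast
      qed
      have pl: "pend_leaf V adj e = r" "pend_inner V adj e = v0"
        using v0L ev ur by (simp_all add: pend_leaf_def pend_inner_def)
      have a: "s1 \<in> L" "s2 \<in> L" "s1 \<noteq> r" "s2 \<noteq> r" "on_path V adj v0 s1 s2"
        using adm True pl unfolding admissible_def by auto
      have s1V: "s1 \<in> V" and s2V: "s2 \<in> V" using a leavesV by auto
      have ne: "s1 \<noteq> s2"
      proof
        assume "s1 = s2"
        then have "v0 = s1" using on_path_same[OF s1V] a(5) by simp
        then show False using v0L a(1) by simp
      qed
      have c: "\<forall>v\<in>V-{r}. ((v \<in> anc r) \<noteq> (v \<in> anc s1) \<and> (v \<in> anc r) \<noteq> (v \<in> anc s2)) = (v = v0)"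
      proof
        fix v assume v: "v \<in> V - {r}"
        have vr: "(v \<in> anc r) = False" using v anc_r by simp
        show "((v \<in> anc r) \<noteq> (v \<in> anc s1) \<and> (v \<in> anc r) \<noteq> (v \<in> anc s2)) = (v = v0)"
        proof (cases "v = v0")
          case True
          have "v0 \<in> anc s1" "v0 \<in> anc s2" using root_child_anc[OF rL v0 ur] s1V s2V a(3,4) by auto
          then show ?thesis using True vr by simp
        next
          case False
          show ?thesis
          proof (rule ccontr)
            assume "\<not> ?thesis"
            then have d: "v \<in> anc s1" "v \<in> anc s2" using False vr by auto
            have "v \<in> anc v0" using convex_path[OF s1V s2V _ _ _ a(5)] v d by blast
            then show False using ancv0(1) ur anc_r False v by auto
          qed
        qed
      qed
      show ?thesis by (rule that[of r]) (use a ne rL c pl in auto)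
    qed
    have lv: "lam psi (parent v0, v0) h = lam psi e h" using ev by simp
    have comb: "Dd psi h i s1 + Dd psi h i s2 = 2 * lam psi e h + Dd psi h s1 s2"
      using pend_comb[OF cond v0] lv by simp
    have num: "Rnum V adj r psi e s1 s2 s3 s4 h = exp (Dd psi h i s1) * exp (Dd psi h i s2)"
      unfolding Rnum_def using True pl q3_pend[OF i] by simp
    have den: "Rden V adj r psi e s1 s2 s3 s4 h = exp (Dd psi h s1 s2)"
      unfolding Rden_def using True pl q3_pend[OF i] by simp
    show ?thesis unfolding num den using comb by (simp add: exp_add[symmetric])
  next
    case False
    then have uL: "?u \<notin> L" and v0L: "v0 \<notin> L" using ev unfolding is_pendant_def by auto
    have a: "s1 \<in> L" "s2 \<in> L" "s3 \<in> L" "s4 \<in> L" "on_path V adj ?u s1 s2" "\<not> on_path V adj v0 s1 s2"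
      "on_path V adj v0 s3 s4" "\<not> on_path V adj ?u s3 s4"
      using adm False ev unfolding admissible_def by auto
    have sV: "s1 \<in> V" "s2 \<in> V" "s3 \<in> V" "s4 \<in> V" using a leavesV by auto
    have v0r: "v0 \<in> V - {r}" using v0 by blast
    have cd: "v0 \<in> anc s3" "v0 \<in> anc s4"
    proof -
      have eq: "(v0 \<in> anc s3) = (v0 \<in> anc s4)"
        using cross_path[OF sV(3,4) v0] a(8) by blast
      have "(v0 \<in> anc v0) = (v0 \<in> anc s3)" using convex_path[OF sV(3,4) v0 eq a(7)] .
      then show "v0 \<in> anc s3" "v0 \<in> anc s4" using anc_self[OF v0(1)] eq by auto
    qed
    have ab: "v0 \<notin> anc s1" "v0 \<notin> anc s2"
    proof -
      have eq: "(v0 \<in> anc s1) = (v0 \<in> anc s2)"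
        using cross_path[OF sV(1,2) v0] a(6) by blast
      have "(v0 \<in> anc ?u) = (v0 \<in> anc s1)" using convex_path[OF sV(1,2) v0 eq a(5)] .
      then show "v0 \<notin> anc s1" "v0 \<notin> anc s2" using ancv0(2) eq by auto
    qed
    have n12: "s1 \<noteq> s2"
    proof
      assume "s1 = s2" then have "?u = s1" using on_path_same[OF sV(1)] a(5) by simp
      then show False using uL a(1) by simp
    qed
    have n34: "s3 \<noteq> s4"
    proof
      assume "s3 = s4" then have "v0 = s3" using on_path_same[OF sV(3)] a(7) by simp
      then show False using v0L a(3) by simp
    qed
    have dist: "s1 \<noteq> s3" "s1 \<noteq> s4" "s2 \<noteq> s3" "s2 \<noteq> s4" using ab cd by auto
    have oth: "\<forall>v\<in>V-{r}. v \<noteq> v0 \<longrightarrow> \<not> ((v \<in> anc s1) \<noteq> (v \<in> anc s2) \<and> (v \<in> anc s3) \<noteq> (v \<in> anc s4))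
        \<and> ((v \<in> anc s1) = (v \<in> anc s2) \<and> (v \<in> anc s3) = (v \<in> anc s4) \<longrightarrow> (v \<in> anc s1) = (v \<in> anc s3))"
    proof (intro ballI impI)
      fix v assume v: "v \<in> V - {r}" and vne: "v \<noteq> v0"
      then have vV: "v \<in> V" "v \<noteq> r" by auto
      have A: "\<not> ((v \<in> anc s1) \<noteq> (v \<in> anc s2) \<and> (v \<in> anc s3) \<noteq> (v \<in> anc s4))"
      proof
        assume h: "(v \<in> anc s1) \<noteq> (v \<in> anc s2) \<and> (v \<in> anc s3) \<noteq> (v \<in> anc s4)"
        have p1: "on_path V adj v s1 s2" using cross_path[OF sV(1,2) vV] h by blast
        have p2: "on_path V adj v s3 s4" using cross_path[OF sV(3,4) vV] h by blast
        have "(v0 \<in> anc v) = (v0 \<in> anc s1)" using convex_path[OF sV(1,2) v0 _ p1] ab by simp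
        moreover have "(v0 \<in> anc v) = (v0 \<in> anc s3)" using convex_path[OF sV(3,4) v0 _ p2] cd by simp
        ultimately show False using ab cd by simp
      qed
      have B: "(v \<in> anc s1) = (v \<in> anc s2) \<and> (v \<in> anc s3) = (v \<in> anc s4) \<longrightarrow> (v \<in> anc s1) = (v \<in> anc s3)"
      proof
        assume h: "(v \<in> anc s1) = (v \<in> anc s2) \<and> (v \<in> anc s3) = (v \<in> anc s4)"
        have "(v \<in> anc ?u) = (v \<in> anc s1)" using convex_path[OF sV(1,2) vV _ a(5)] h by blast
        moreover have "(v \<in> anc v0) = (v \<in> anc s3)" using convex_path[OF sV(3,4) vV _ a(7)] h by blast
        moreover have "(v \<in> anc v0) = (v \<in> anc ?u)" using ancv0 vne by blast
        ultimately show "(v \<in> anc s1) = (v \<in> anc s3)" by simp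
      qed
      show "\<not> ((v \<in> anc s1) \<noteq> (v \<in> anc s2) \<and> (v \<in> anc s3) \<noteq> (v \<in> anc s4))
        \<and> ((v \<in> anc s1) = (v \<in> anc s2) \<and> (v \<in> anc s3) = (v \<in> anc s4) \<longrightarrow> (v \<in> anc s1) = (v \<in> anc s3))"
        using A B by blast
    qed
    have lv: "lam psi (parent v0, v0) h = lam psi e h" using ev by simp
    have comb: "Dd psi h s1 s3 + Dd psi h s2 s4 = 2 * lam psi e h + (Dd psi h s1 s2 + Dd psi h s3 s4)"
      using int_comb[OF v0 ab cd oth] lv by simp
    have q4: "qfour V adj r psi (lab4 s1 s2 s3 s4 h nA h nA) = exp (Dd psi h s1 s3)"
      "qfour V adj r psi (lab4 s1 s2 s3 s4 nA h nA h) = exp (Dd psi h s2 s4)"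
      "qfour V adj r psi (lab4 s1 s2 s3 s4 h h nA nA) = exp (Dd psi h s1 s2)"
      "qfour V adj r psi (lab4 s1 s2 s3 s4 nA nA h h) = exp (Dd psi h s3 s4)"
      using q4_int[OF a(1-4) n12 dist(1,2,3,4) n34] by blast+
    have num: "Rnum V adj r psi e s1 s2 s3 s4 h = exp (Dd psi h s1 s3) * exp (Dd psi h s2 s4)"
      unfolding Rnum_def using False q4 by simp
    have den: "Rden V adj r psi e s1 s2 s3 s4 h = exp (Dd psi h s1 s2) * exp (Dd psi h s3 s4)"
      unfolding Rden_def using False q4 by simp
    show ?thesis unfolding num den using comb by (simp add: exp_add[symmetric])
  qed
qed

end



lemma lam_vals: "lam psi e nC = -2 * (psi e nC + psi e nT)" "lam psi e nG = -2 * (psi e nG + psi e nT)"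
  "lam psi e nT = -2 * (psi e nC + psi e nG)"
  by (simp_all add: lam_def sum_nuc fpsi_def)

lemma exp_ineq: "exp a * exp b \<le> exp c \<longleftrightarrow> a + b \<le> (c::real)"
  by (simp add: exp_add[symmetric])

theorem mainTheorem8:
  fixes V :: "'v set" and adj :: "'v \<Rightarrow> 'v \<Rightarrow> bool" and r :: 'v
    and psi :: "'v \<times> 'v \<Rightarrow> nuc \<Rightarrow> real"
    and s1 s2 s3 s4 :: "'v \<times> 'v \<Rightarrow> 'v"
  assumes tree: "is_tree V adj"
    and m3: "card (leaves V adj) \<ge> 3"
    and deg: "\<forall>v \<in> V - leaves V adj. card (neighbours V adj v) \<ge> 3"
    and root: "r \<in> leaves V adj"
    and sel: "\<forall>e \<in> dedges V adj r. admissible V adj e (s1 e) (s2 e) (s3 e) (s4 e)"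
  defines "R \<equiv> \<lambda>e h. Rratio V adj r psi e (s1 e) (s2 e) (s3 e) (s4 e) h"
  shows "(\<forall>e \<in> dedges V adj r. \<forall>h \<in> {nC, nG, nT}.
            Rden V adj r psi e (s1 e) (s2 e) (s3 e) (s4 e) h \<noteq> 0)
     \<and> ((\<forall>e \<in> dedges V adj r. \<forall>h \<in> {nC, nG, nT}. 0 \<le> psi e h)
         \<longleftrightarrow> (\<forall>e \<in> dedges V adj r.
                R e nC * R e nT \<le> R e nG \<and> R e nG * R e nT \<le> R e nC \<and> R e nC * R e nG \<le> R e nT))
     \<and> (\<forall>e \<in> dedges V adj r.
          (R e nC * R e nT \<le> R e nG \<longleftrightarrow> 0 \<le> psi e nC)
        \<and> (R e nG * R e nT \<le> R e nC \<longleftrightarrow> 0 \<le> psi e nG)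
        \<and> (R e nC * R e nG \<le> R e nT \<longleftrightarrow> 0 \<le> psi e nT))"
proof -
  have rV: "r \<in> V" using root unfolding leaves_def by blast
  interpret rtree V adj r using tree rV by unfold_locales
  have key: "0 < Rden V adj r psi e (s1 e) (s2 e) (s3 e) (s4 e) h \<and> R e h = exp (2 * lam psi e h)"
    if e: "e \<in> dedges V adj r" for e h
  proof -
    have "0 < Rden V adj r psi e (s1 e) (s2 e) (s3 e) (s4 e) h \<and>
       Rnum V adj r psi e (s1 e) (s2 e) (s3 e) (s4 e) h = exp (2 * lam psi e h) * Rden V adj r psi e (s1 e) (s2 e) (s3 e) (s4 e) h"
      using edge_R[OF root m3 e] sel e by blast
    then show ?thesis unfolding R_def Rratio_def by simp
  qed
  have part3: "(R e nC * R e nT \<le> R e nG \<longleftrightarrow> 0 \<le> psi e nC)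
        \<and> (R e nG * R e nT \<le> R e nC \<longleftrightarrow> 0 \<le> psi e nG)
        \<and> (R e nC * R e nG \<le> R e nT \<longleftrightarrow> 0 \<le> psi e nT)" if e: "e \<in> dedges V adj r" for e
  proof -
    have k: "R e nC = exp (2 * (-2 * (psi e nC + psi e nT)))" "R e nG = exp (2 * (-2 * (psi e nG + psi e nT)))"
      "R e nT = exp (2 * (-2 * (psi e nC + psi e nG)))"
      using key[OF e, of nC] key[OF e, of nG] key[OF e, of nT] by (simp_all add: lam_vals)
    show ?thesis unfolding k exp_ineq by (simp add: algebra_simps)
  qed
  show ?thesis
  proof (intro conjI)
    show "\<forall>e \<in> dedges V adj r. \<forall>h \<in> {nC, nG, nT}. Rden V adj r psi e (s1 e) (s2 e) (s3 e) (s4 e) h \<noteq> 0"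
      using key by (metis less_irrefl)
    show "(\<forall>e \<in> dedges V adj r. \<forall>h \<in> {nC, nG, nT}. 0 \<le> psi e h)
         \<longleftrightarrow> (\<forall>e \<in> dedges V adj r.
                R e nC * R e nT \<le> R e nG \<and> R e nG * R e nT \<le> R e nC \<and> R e nC * R e nG \<le> R e nT)"
      using part3 by auto
    show "\<forall>e \<in> dedges V adj r.
          (R e nC * R e nT \<le> R e nG \<longleftrightarrow> 0 \<le> psi e nC)
        \<and> (R e nG * R e nT \<le> R e nC \<longleftrightarrow> 0 \<le> psi e nG)
        \<and> (R e nC * R e nG \<le> R e nT \<longleftrightarrow> 0 \<le> psi e nT)"
      using part3 by blast
  qed
qed


end
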